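(* Let $(V,\rho)$ be a finite rank torsion free $\mathfrak{sl}(2)$-module. Then its Casimir operator $C_\rho$, regarded as a $\mathbb{C}$-linear endomorphism of $V$, has a minimal polynomial, and it coincides with the minimal polynomial of the Casimir operator $C_{\rho_{\mathrm{rat}}}$ of its rationalization $F_{\mathrm{rat}}(V,\rho)=(S^{-1}V,\rho_{\mathrm{rat}})$.
   Context: $\mathfrak{sl}(2)$ has basis $L_{-1}=f$, $L_0=-\tfrac12 h$, $L_1=-e$ for a Chevalley basis $e,f,h$ ($[e,f]=h$, $[h,e]=2e$, $[h,f]=-2f$). An $\mathfrak{sl}(2)$-module $(V,\rho)$ is a $\mathbb{C}[z]$-module via $z\cdot v=\rho(L_0)v$; it is torsion free if torsion free as a $\mathbb{C}[z]$-module and of finite rank if $S^{-1}V$ is finite-dimensional over $\mathbb{C}(z)$, $S=\mathbb{C}[z]\setminus\{0\}$. The Casimir operator is $C_\rho=\rho(L_0)(\rho(L_0)-1)-\rho(L_{-1})\rho(L_1)$. The rationalization is $(S^{-1}V,\rho_{\mathrm{rat}})$ with $\rho_{\mathrm{rat}}(L_{-1})(v/p(z))=\rho(L_{-1})(v)/p(z-1)$, $\rho_{\mathrm{rat}}(L_0)(v/p(z))=zv/p(z)$, $\rho_{\mathrm{rat}}(L_1)(v/p(z))=\rho(L_1)(v)/p(z+1)$. *)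

theory Defs
  imports Complex_Main "HOL-Computational_Algebra.Polynomial"
begin

definition sl2_module ::
  "(complex \<Rightarrow> 'v::ab_group_add \<Rightarrow> 'v) \<Rightarrow> ('v \<Rightarrow> 'v) \<Rightarrow> ('v \<Rightarrow> 'v) \<Rightarrow> ('v \<Rightarrow> 'v) \<Rightarrow> bool" where
  "sl2_module scale e f h \<longleftrightarrow>
     vector_space scale \<and>
     Vector_Spaces.linear scale scale e \<and> Vector_Spaces.linear scale scale f \<and>
     Vector_Spaces.linear scale scale h \<and>
     (\<forall>v. e (f v) - f (e v) = h v) \<and>
     (\<forall>v. h (e v) - e (h v) = scale 2 (e v)) \<and>
     (\<forall>v. h (f v) - f (h v) = - scale 2 (f v))"

definition Lm1 :: "('v \<Rightarrow> 'v) \<Rightarrow> 'v \<Rightarrow> 'v" where "Lm1 f = f"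
definition L0 :: "(complex \<Rightarrow> 'v::ab_group_add \<Rightarrow> 'v) \<Rightarrow> ('v \<Rightarrow> 'v) \<Rightarrow> 'v \<Rightarrow> 'v" where
  "L0 scale h = (\<lambda>v. scale (-1/2) (h v))"
definition L1 :: "('v::ab_group_add \<Rightarrow> 'v) \<Rightarrow> 'v \<Rightarrow> 'v" where "L1 e = (\<lambda>v. - e v)"

definition poly_op :: "(complex \<Rightarrow> 'v::ab_group_add \<Rightarrow> 'v) \<Rightarrow> complex poly \<Rightarrow> ('v \<Rightarrow> 'v) \<Rightarrow> 'v \<Rightarrow> 'v" where
  "poly_op scale P T v = (\<Sum>i\<le>degree P. scale (coeff P i) ((T ^^ i) v))"

text \<open>C[z]-module structure: z acts as L_0; p . v = p(L_0) v.\<close>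
definition zact :: "(complex \<Rightarrow> 'v::ab_group_add \<Rightarrow> 'v) \<Rightarrow> ('v \<Rightarrow> 'v) \<Rightarrow> complex poly \<Rightarrow> 'v \<Rightarrow> 'v" where
  "zact scale h p v = poly_op scale p (L0 scale h) v"

definition torsion_free :: "(complex \<Rightarrow> 'v::ab_group_add \<Rightarrow> 'v) \<Rightarrow> ('v \<Rightarrow> 'v) \<Rightarrow> bool" where
  "torsion_free scale h \<longleftrightarrow> (\<forall>p v. p \<noteq> 0 \<longrightarrow> zact scale h p v = 0 \<longrightarrow> v = 0)"

text \<open>The localization S^{-1}V, S = C[z] - {0}, realised as pairs (v, p) with p \<noteq> 0
(standing for v/p) modulo the usual equivalence relation.\<close>
definition frac_ok :: "'v \<times> complex poly \<Rightarrow> bool" where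
  "frac_ok x \<longleftrightarrow> snd x \<noteq> 0"

definition frac_eq :: "(complex \<Rightarrow> 'v::ab_group_add \<Rightarrow> 'v) \<Rightarrow> ('v \<Rightarrow> 'v) \<Rightarrow>
    'v \<times> complex poly \<Rightarrow> 'v \<times> complex poly \<Rightarrow> bool" where
  "frac_eq scale h x y \<longleftrightarrow>
     (\<exists>s. s \<noteq> 0 \<and> zact scale h s (zact scale h (snd y) (fst x) - zact scale h (snd x) (fst y)) = 0)"

definition frac_add :: "(complex \<Rightarrow> 'v::ab_group_add \<Rightarrow> 'v) \<Rightarrow> ('v \<Rightarrow> 'v) \<Rightarrow>
    'v \<times> complex poly \<Rightarrow> 'v \<times> complex poly \<Rightarrow> 'v \<times> complex poly" where
  "frac_add scale h x y =
     (zact scale h (snd y) (fst x) + zact scale h (snd x) (fst y), snd x * snd y)"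

definition frac_zero :: "'v::ab_group_add \<times> complex poly" where
  "frac_zero = (0, 1)"

definition frac_sum :: "(complex \<Rightarrow> 'v::ab_group_add \<Rightarrow> 'v) \<Rightarrow> ('v \<Rightarrow> 'v) \<Rightarrow>
    ('v \<times> complex poly) list \<Rightarrow> 'v \<times> complex poly" where
  "frac_sum scale h xs = foldr (frac_add scale h) xs frac_zero"

text \<open>Scalar multiplication by a complex number and by a rational function a/b \<in> C(z).\<close>
definition frac_cscale :: "(complex \<Rightarrow> 'v::ab_group_add \<Rightarrow> 'v) \<Rightarrow> complex \<Rightarrow>
    'v \<times> complex poly \<Rightarrow> 'v \<times> complex poly" where
  "frac_cscale scale c x = (scale c (fst x), snd x)"

definition frac_rscale :: "(complex \<Rightarrow> 'v::ab_group_add \<Rightarrow> 'v) \<Rightarrow> ('v \<Rightarrow> 'v) \<Rightarrow>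
    complex poly \<times> complex poly \<Rightarrow> 'v \<times> complex poly \<Rightarrow> 'v \<times> complex poly" where
  "frac_rscale scale h ab x = (zact scale h (fst ab) (fst x), snd ab * snd x)"

text \<open>Finite rank: S^{-1}V is spanned over C(z) by finitely many elements.\<close>
definition finite_rank :: "(complex \<Rightarrow> 'v::ab_group_add \<Rightarrow> 'v) \<Rightarrow> ('v \<Rightarrow> 'v) \<Rightarrow> bool" where
  "finite_rank scale h \<longleftrightarrow>
     (\<exists>bs :: ('v \<times> complex poly) list. list_all frac_ok bs \<and>
        (\<forall>x. frac_ok x \<longrightarrow>
           (\<exists>cs :: (complex poly \<times> complex poly) list.
               length cs = length bs \<and> list_all (\<lambda>c. snd c \<noteq> 0) cs \<and>
               frac_eq scale h x (frac_sum scale h (map2 (frac_rscale scale h) cs bs)))))"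

definition casimir :: "(complex \<Rightarrow> 'v::ab_group_add \<Rightarrow> 'v) \<Rightarrow> ('v \<Rightarrow> 'v) \<Rightarrow> ('v \<Rightarrow> 'v) \<Rightarrow> ('v \<Rightarrow> 'v) \<Rightarrow> 'v \<Rightarrow> 'v" where
  "casimir scale e f h v =
     L0 scale h (L0 scale h v) - L0 scale h v - Lm1 f (L1 e v)"

definition rat_Lm1 :: "('v \<Rightarrow> 'v) \<Rightarrow> 'v \<times> complex poly \<Rightarrow> 'v \<times> complex poly" where
  "rat_Lm1 f x = (Lm1 f (fst x), pcompose (snd x) [:-1, 1:])"
definition rat_L0 :: "(complex \<Rightarrow> 'v::ab_group_add \<Rightarrow> 'v) \<Rightarrow> ('v \<Rightarrow> 'v) \<Rightarrow> 'v \<times> complex poly \<Rightarrow> 'v \<times> complex poly" where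
  "rat_L0 scale h x = (L0 scale h (fst x), snd x)"
definition rat_L1 :: "('v::ab_group_add \<Rightarrow> 'v) \<Rightarrow> 'v \<times> complex poly \<Rightarrow> 'v \<times> complex poly" where
  "rat_L1 e x = (L1 e (fst x), pcompose (snd x) [:1, 1:])"

definition casimir_rat :: "(complex \<Rightarrow> 'v::ab_group_add \<Rightarrow> 'v) \<Rightarrow> ('v \<Rightarrow> 'v) \<Rightarrow> ('v \<Rightarrow> 'v) \<Rightarrow> ('v \<Rightarrow> 'v) \<Rightarrow>
    'v \<times> complex poly \<Rightarrow> 'v \<times> complex poly" where
  "casimir_rat scale e f h x =
     frac_add scale h
       (frac_add scale h (rat_L0 scale h (rat_L0 scale h x)) (frac_cscale scale (-1) (rat_L0 scale h x)))
       (frac_cscale scale (-1) (rat_Lm1 f (rat_L1 e x)))"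

definition frac_poly_op :: "(complex \<Rightarrow> 'v::ab_group_add \<Rightarrow> 'v) \<Rightarrow> ('v \<Rightarrow> 'v) \<Rightarrow> complex poly \<Rightarrow>
    ('v \<times> complex poly \<Rightarrow> 'v \<times> complex poly) \<Rightarrow> 'v \<times> complex poly \<Rightarrow> 'v \<times> complex poly" where
  "frac_poly_op scale h P T x =
     frac_sum scale h (map (\<lambda>i. frac_cscale scale (coeff P i) ((T ^^ i) x)) [0..<Suc (degree P)])"

definition is_minpoly :: "(complex poly \<Rightarrow> bool) \<Rightarrow> complex poly \<Rightarrow> bool" where
  "is_minpoly kills P \<longleftrightarrow> P \<noteq> 0 \<and> lead_coeff P = 1 \<and> kills P \<and>
     (\<forall>Q. Q \<noteq> 0 \<longrightarrow> kills Q \<longrightarrow> degree P \<le> degree Q)"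

definition kills_casimir :: "(complex \<Rightarrow> 'v::ab_group_add \<Rightarrow> 'v) \<Rightarrow> ('v \<Rightarrow> 'v) \<Rightarrow> ('v \<Rightarrow> 'v) \<Rightarrow> ('v \<Rightarrow> 'v) \<Rightarrow>
    complex poly \<Rightarrow> bool" where
  "kills_casimir scale e f h P \<longleftrightarrow> (\<forall>v. poly_op scale P (casimir scale e f h) v = 0)"

definition kills_casimir_rat :: "(complex \<Rightarrow> 'v::ab_group_add \<Rightarrow> 'v) \<Rightarrow> ('v \<Rightarrow> 'v) \<Rightarrow> ('v \<Rightarrow> 'v) \<Rightarrow> ('v \<Rightarrow> 'v) \<Rightarrow>
    complex poly \<Rightarrow> bool" where
  "kills_casimir_rat scale e f h P \<longleftrightarrow>
     (\<forall>x. frac_ok x \<longrightarrow> frac_eq scale h (frac_poly_op scale h P (casimir_rat scale e f h) x) frac_zero)"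

end

theory Submission
  imports Defs "Jordan_Normal_Form.Char_Poly"
begin


definition shm :: "complex poly poly \<Rightarrow> complex poly poly" where
  "shm a = map_poly (\<lambda>c. pcompose c [:-1, 1:]) a"
definition shp :: "complex poly poly \<Rightarrow> complex poly poly" where
  "shp a = map_poly (\<lambda>c. pcompose c [:1, 1:]) a"

lemma map_poly_add_hom:
  fixes \<phi> :: "'a::comm_ring_1 \<Rightarrow> 'b::comm_ring_1"
  assumes "\<And>x y. \<phi> (x + y) = \<phi> x + \<phi> y"
  shows "map_poly \<phi> (a + b) = map_poly \<phi> a + map_poly \<phi> b"
proof -
  have "\<phi> 0 = 0" using assms[of 0 0] by simp
  then show ?thesis by (intro poly_eqI) (simp add: coeff_map_poly assms)
qed

lemma map_poly_mult_hom:
  fixes \<phi> :: "'a::comm_ring_1 \<Rightarrow> 'b::comm_ring_1"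
  assumes add: "\<And>x y. \<phi> (x + y) = \<phi> x + \<phi> y" and mult: "\<And>x y. \<phi> (x * y) = \<phi> x * \<phi> y"
  shows "map_poly \<phi> (a * b) = map_poly \<phi> a * map_poly \<phi> b"
proof (induction a)
  case 0 then show ?case by simp
next
  case (pCons c a)
  have z: "\<phi> 0 = 0" using add[of 0 0] by simp
  have "map_poly \<phi> (pCons c a * b) = map_poly \<phi> (Polynomial.smult c b + pCons 0 (a * b))"
    by simp
  also have "\<dots> = Polynomial.smult (\<phi> c) (map_poly \<phi> b) + pCons 0 (map_poly \<phi> a * map_poly \<phi> b)"
    by (simp add: map_poly_add_hom[OF add] map_poly_smult[OF z mult] Polynomial.map_poly_pCons[of \<phi>, OF z] pCons.IH z)
  also have "\<dots> = map_poly \<phi> (pCons c a) * map_poly \<phi> b"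
    by (simp add: Polynomial.map_poly_pCons[of \<phi>, OF z])
  finally show ?case .
qed

lemma shm_mult: "shm (a * b) = shm a * shm b"
  unfolding shm_def by (rule map_poly_mult_hom) (auto simp: pcompose_add pcompose_mult)
lemma shp_mult: "shp (a * b) = shp a * shp b"
  unfolding shp_def by (rule map_poly_mult_hom) (auto simp: pcompose_add pcompose_mult)

lemma shm_shp: "shm (shp a) = a"
proof -
  have "pcompose [:1, 1:] [:-1, 1 :: complex:] = [:0, 1:]"
    by (simp add: pcompose_pCons)
  then have *: "pcompose (pcompose c [:1, 1:]) [:-1, 1:] = c" for c :: "complex poly"
    by (simp add: pcompose_assoc[symmetric])
  show ?thesis unfolding shm_def shp_def
    by (subst map_poly_map_poly) (auto simp: o_def *)
qed

lemma pc_pm: "pcompose (pcompose c [:1, 1:]) [:-1, 1:] = (c :: complex poly)"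
proof -
  have "pcompose [:1, 1:] [:-1, 1 :: complex:] = [:0, 1:]"
    by (simp add: pcompose_pCons)
  then show ?thesis by (simp add: pcompose_assoc[symmetric])
qed

lemma shm_coeff: "coeff (shm a) i = pcompose (coeff a i) [:-1, 1:]"
  unfolding shm_def by (simp add: coeff_map_poly)

lemma shm_smult: "shm (Polynomial.smult c a) = Polynomial.smult (pcompose c [:-1, 1:]) (shm a)"
  unfolding shm_def by (rule map_poly_smult) (auto simp: pcompose_mult)

lemma pc_m_eq0: "pcompose c [:-1, 1 :: complex:] = 0 \<longleftrightarrow> c = 0"
  by (rule pcompose_eq_0_iff) simp

lemma shm_eq0: "shm a = 0 \<longleftrightarrow> a = 0"
proof
  assume "shm a = 0"
  then have "\<forall>i. coeff a i = 0" using shm_coeff[of a] pc_m_eq0 by (metis coeff_0)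
  then show "a = 0" by (simp add: poly_eqI)
qed (simp add: shm_def)

lemma shm_degree: "degree (shm a) = degree a"
  unfolding shm_def by (rule degree_map_poly) (simp add: pc_m_eq0)

lemma shm_P: "shm [:- [:0, 1, 1:], 1:] = [:- [:0, -1, 1:], 1:]"
  unfolding shm_def by (simp add: Polynomial.map_poly_pCons pcompose_pCons)

lemma inv_const:
  fixes p q :: "complex poly"
  assumes q: "q \<noteq> 0" and eq: "p * pcompose q [:-1, 1:] = q * pcompose p [:-1, 1:]"
  shows "\<exists>c. p = Polynomial.smult c q"
proof -
  have "finite ((of_nat :: nat \<Rightarrow> complex) -` {x. poly q x = 0})"
    by (rule finite_vimageI) (auto simp: poly_roots_finite q inj_of_nat)
  then obtain N where N: "\<And>k. poly q (of_nat k) = 0 \<Longrightarrow> k < N"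
    by (auto simp: finite_nat_set_iff_bounded)
  define c where "c = poly p (of_nat N) / poly q (of_nat N)"
  define g where "g = p - Polynomial.smult c q"
  have qN: "poly q (of_nat (N + j)) \<noteq> 0" for j using N[of "N + j"] by auto
  have eqx: "poly p x * poly q (x - 1) = poly q x * poly p (x - 1)" for x
    using arg_cong[OF eq, of "\<lambda>r. poly r x"] by (simp add: poly_pcompose)
  have geq: "poly g x * poly q (x - 1) = poly q x * poly g (x - 1)" for x
    using eqx[of x] by (simp add: g_def algebra_simps)
  have gz: "poly g (of_nat (N + j)) = 0" for j
  proof (induction j)
    case 0 then show ?case using qN[of 0] by (simp add: g_def c_def)
  next
    case (Suc j)
    have "poly g (of_nat (N + Suc j)) * poly q (of_nat (N + j)) = 0"
      using geq[of "of_nat (N + Suc j)"] Suc by simp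
    then show ?case using qN[of j] by simp
  qed
  have "g = 0"
  proof (rule ccontr)
    assume "g \<noteq> 0"
    then have "finite {x. poly g x = 0}" by (rule poly_roots_finite)
    moreover have "range (\<lambda>j. (of_nat (N + j) :: complex)) \<subseteq> {x. poly g x = 0}" using gz by auto
    ultimately have "finite (range (\<lambda>j. (of_nat (N + j) :: complex)))" by (rule finite_subset[rotated])
    moreover have "inj (\<lambda>j. (of_nat (N + j) :: complex))" by (auto simp: inj_def)
    ultimately show False using finite_imageD by fastforce
  qed
  then show ?thesis by (auto simp: g_def)
qed


lemma const_mult_eq_smult: "[:c:] * p = Polynomial.smult c p"
  by simp

lemma alg_main:
  fixes J :: "complex poly poly \<Rightarrow> bool"
  assumes Jdiff: "\<And>a b. J a \<Longrightarrow> J b \<Longrightarrow> J (a - b)"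
    and Jmult: "\<And>a b. J a \<Longrightarrow> J (b * a)"
    and Jsat: "\<And>a s. J ([:s:] * a) \<Longrightarrow> s \<noteq> 0 \<Longrightarrow> J a"
    and Jm: "\<And>a. J a \<Longrightarrow> J (shm a * [:- [:0, -1, 1:], 1:])"
    and Jp: "\<And>a. J a \<Longrightarrow> J (shp a * [:- [:0, 1, 1:], 1:])"
    and J0: "J a0" "a0 \<noteq> 0"
  shows "\<exists>m. m \<noteq> 0 \<and> J (map_poly (\<lambda>x. [:x:]) m)"
proof -
  define P where "P n \<longleftrightarrow> (\<exists>b. J b \<and> b \<noteq> 0 \<and> degree b = n)" for n
  have "P (degree a0)" using J0 by (auto simp: P_def)
  then obtain n where Pn: "P n" and nmin: "\<And>m. m < n \<Longrightarrow> \<not> P m"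
    by (metis exists_least_iff)
  then obtain a where Ja: "J a" and a0: "a \<noteq> 0" and da: "degree a = n" by (auto simp: P_def)
  have amin: "degree a \<le> degree b" if "J b" "b \<noteq> 0" for b
    using nmin[of "degree b"] that da by (auto simp: P_def not_less[symmetric])
  have divi: "\<exists>c x. c \<noteq> 0 \<and> Polynomial.smult c b = a * x" if Jb: "J b" for b
  proof -
    obtain q r where qr: "pseudo_divmod b a = (q, r)" by (cases "pseudo_divmod b a") auto
    define c where "c = coeff a (degree a) ^ (Suc (degree b) - degree a)"
    have eq: "Polynomial.smult c b = a * q + r" and r: "r = 0 \<or> degree r < degree a"
      using pseudo_divmod[OF a0 qr] by (auto simp: c_def)
    have c0: "c \<noteq> 0" using a0 by (simp add: c_def)
    have "J (Polynomial.smult c b)" using Jmult[OF Jb, of "[:c:]"] by simp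
    moreover have "J (a * q)" using Jmult[OF Ja, of q] by (simp add: mult.commute)
    ultimately have "J (Polynomial.smult c b - a * q)" by (rule Jdiff)
    then have Jr: "J r" using eq by (simp add: algebra_simps)
    have "r = 0"
    proof (rule ccontr)
      assume "r \<noteq> 0"
      then show False using amin[OF Jr] r by auto
    qed
    then show ?thesis using eq c0 by auto
  qed
  define P1 :: "complex poly poly" where "P1 = [:- [:0, -1, 1:], 1:]"
  define sa where "sa = shm a"
  have sa0: "sa \<noteq> 0" using a0 shm_eq0 by (auto simp: sa_def)
  have P10: "P1 \<noteq> 0" and dP1: "degree P1 = 1" by (auto simp: P1_def)
  obtain c1 x where c1: "c1 \<noteq> 0" and x: "Polynomial.smult c1 (sa * P1) = a * x"
    using divi[OF Jm[OF Ja]] by (auto simp: sa_def P1_def)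
  obtain c2' y' where c2': "c2' \<noteq> 0" and y': "Polynomial.smult c2' (shp a * [:- [:0, 1, 1:], 1:]) = a * y'"
    using divi[OF Jp[OF Ja]] by auto
  define c2 where "c2 = pcompose c2' [:-1, 1:]"
  define y where "y = shm y'"
  have c2: "c2 \<noteq> 0" using c2' pc_m_eq0 by (simp add: c2_def)
  have y: "Polynomial.smult c2 (a * P1) = sa * y"
  proof -
    have "shm (Polynomial.smult c2' (shp a * [:- [:0, 1, 1:], 1:])) = Polynomial.smult c2 (a * P1)"
      by (simp only: shm_smult shm_mult shm_shp shm_P c2_def P1_def)
    moreover have "shm (a * y') = sa * y" by (simp only: shm_mult sa_def y_def)
    ultimately show ?thesis using y' by metis
  qed
  have x0: "x \<noteq> 0" using x c1 sa0 P10 by auto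
  have y0: "y \<noteq> 0" using y c2 a0 P10 by auto
  have big: "Polynomial.smult (c1 * c2) (P1 * P1) * (a * sa) = (x * y) * (a * sa)"
  proof -
    have "Polynomial.smult (c1 * c2) (P1 * P1) * (a * sa) = Polynomial.smult c1 (sa * P1) * Polynomial.smult c2 (a * P1)"
      by (simp add: ac_simps)
    also have "\<dots> = (x * y) * (a * sa)" using x y by (simp add: ac_simps)
    finally show ?thesis .
  qed
  have asa: "a * sa \<noteq> 0" using a0 sa0 by simp
  have xy: "Polynomial.smult (c1 * c2) (P1 * P1) = x * y"
    using mult_right_cancel[OF asa] big by blast
  have "poly P1 [:0, -1, 1:] = 0" by (simp add: P1_def)
  then have "poly (x * y) [:0, -1, 1:] = 0" using xy[symmetric] by simp
  then have xory: "poly x [:0, -1, 1:] = 0 \<or> poly y [:0, -1, 1:] = 0" by simp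
  have dx: "degree x = 1"
    using arg_cong[OF x, of degree] c1 sa0 P10 a0 x0 dP1 by (simp add: degree_mult_eq shm_degree sa_def)
  have dy: "degree y = 1"
    using arg_cong[OF y, of degree] c2 sa0 P10 a0 y0 dP1 by (simp add: degree_mult_eq shm_degree sa_def)
  have lin: "\<exists>k. z = P1 * [:k:] \<and> k \<noteq> 0" if "poly z [:0, -1, 1:] = 0" "degree z = 1" for z
  proof -
    have "P1 dvd z" using that(1) by (simp add: P1_def poly_eq_0_iff_dvd)
    then obtain w where w: "z = P1 * w" by (auto elim: dvdE)
    have "w \<noteq> 0" using w that(2) by auto
    then have "degree w = 0" using w that(2) dP1 P10 by (simp add: degree_mult_eq)
    then have "w = [:coeff w 0:]" using degree_0_id by metis
    then show ?thesis using w \<open>w \<noteq> 0\<close> by (metis pCons_0_0)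
  qed
  obtain c k where ck: "c \<noteq> 0" "k \<noteq> 0" "Polynomial.smult c sa = Polynomial.smult k a"
  proof (cases "poly x [:0, -1, 1:] = 0")
    case True
    then obtain k where k: "x = P1 * [:k:]" "k \<noteq> 0" using lin dx by blast
    have "Polynomial.smult c1 sa * P1 = Polynomial.smult k a * P1"
      using x k by (simp add: ac_simps)
    then have "Polynomial.smult c1 sa = Polynomial.smult k a" using mult_right_cancel[OF P10] by blast
    then show ?thesis using that c1 k by blast
  next
    case False
    then have "poly y [:0, -1, 1:] = 0" using xory by simp
    then obtain k where k: "y = P1 * [:k:]" "k \<noteq> 0" using lin dy by blast
    have "Polynomial.smult c2 a * P1 = Polynomial.smult k sa * P1"
      using y k by (simp add: ac_simps)
    then have "Polynomial.smult c2 a = Polynomial.smult k sa" using mult_right_cancel[OF P10] by blast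
    then show ?thesis using that c2 k by metis
  qed
  define l where "l = coeff a (degree a)"
  have l0: "l \<noteq> 0" using a0 by (simp add: l_def)
  have ci: "c * pcompose (coeff a i) [:-1, 1:] = k * coeff a i" for i
    using arg_cong[OF ck(3), of "\<lambda>p. coeff p i"] by (simp add: sa_def shm_coeff)
  have inv: "coeff a i * pcompose l [:-1, 1:] = l * pcompose (coeff a i) [:-1, 1:]" for i
  proof -
    have "c * (coeff a i * pcompose l [:-1, 1:]) = coeff a i * (c * pcompose l [:-1, 1:])" by (simp add: ac_simps)
    also have "\<dots> = coeff a i * (k * l)" using ci[of "degree a"] by (simp add: l_def)
    also have "\<dots> = l * (k * coeff a i)" by (simp add: ac_simps)
    also have "\<dots> = c * (l * pcompose (coeff a i) [:-1, 1:])" using ci[of i] by (simp add: ac_simps)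
    finally show ?thesis using ck(1) by simp
  qed
  have cst: "\<exists>ci. coeff a i = Polynomial.smult ci l" for i
    using inv_const[OF l0 inv[of i]] .
  define m where "m = map_poly (\<lambda>p. coeff p (degree l) / lead_coeff l) a"
  have am: "a = [:l:] * map_poly (\<lambda>x. [:x:]) m"
  proof (rule poly_eqI)
    fix i
    obtain ci where ci: "coeff a i = Polynomial.smult ci l" using cst by blast
    have "coeff m i = ci" using l0 by (simp add: m_def coeff_map_poly ci)
    then show "coeff a i = coeff ([:l:] * map_poly (\<lambda>x. [:x:]) m) i"
      by (simp add: coeff_map_poly ci)
  qed
  have "m \<noteq> 0" using am a0 by auto
  moreover have "J (map_poly (\<lambda>x. [:x:]) m)" using Jsat[of l] am Ja l0 by simp
  ultimately show ?thesis by blast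
qed



locale ract =
  fixes act :: "'a::comm_ring_1 \<Rightarrow> 'v::ab_group_add \<Rightarrow> 'v" and T :: "'v \<Rightarrow> 'v"
  assumes act_addl: "act (a + b) v = act a v + act b v"
    and act_addr: "act a (v + w) = act a v + act a w"
    and act_mult: "act (a * b) v = act a (act b v)"
    and act_one: "act 1 v = v"
    and T_add: "T (v + w) = T v + T w"
    and T_act: "T (act a v) = act a (T v)"
begin

definition gop :: "'a poly \<Rightarrow> 'v \<Rightarrow> 'v" where
  "gop P v = (\<Sum>i\<le>degree P. act (coeff P i) ((T ^^ i) v))"

lemma act_zerol[simp]: "act 0 v = 0"
  using act_addl[of 0 0 v] by simp
lemma act_zeror[simp]: "act a 0 = 0"
  using act_addr[of a 0 0] by simp
lemma act_negr: "act a (- v) = - act a v"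
  using minus_unique[of "act a v" "act a (- v)"] act_addr[of a v "-v"] by simp
lemma act_diffr: "act a (v - w) = act a v - act a w"
  using act_addr[of a v "-w"] act_negr by simp
lemma act_negl: "act (- a) v = - act a v"
  using minus_unique[of "act a v" "act (- a) v"] act_addl[of a "-a" v] by simp
lemma act_diffl: "act (a - b) v = act a v - act b v"
  using act_addl[of a "-b" v] act_negl by simp
lemma act_sumr: "act a (sum g A) = (\<Sum>x\<in>A. act a (g x))"
  by (induction A rule: infinite_finite_induct) (auto simp: act_addr)
lemma act_suml: "act (sum g A) v = (\<Sum>x\<in>A. act (g x) v)"
  by (induction A rule: infinite_finite_induct) (auto simp: act_addl)
lemma T_zero[simp]: "T 0 = 0"
  using T_add[of 0 0] by simp
lemma T_neg: "T (- v) = - T v"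
  using minus_unique[of "T v" "T (- v)"] T_add[of v "-v"] by simp
lemma T_diff: "T (v - w) = T v - T w"
  using T_add[of v "-w"] T_neg by simp
lemma T_sum: "T (sum g A) = (\<Sum>x\<in>A. T (g x))"
  by (induction A rule: infinite_finite_induct) (auto simp: T_add)

lemma gop_bound:
  assumes "degree P \<le> N"
  shows "gop P v = (\<Sum>i\<le>N. act (coeff P i) ((T ^^ i) v))"
  unfolding gop_def
  by (rule sum.mono_neutral_left) (use assms in \<open>auto simp: coeff_eq_0 not_le\<close>)

lemma gop_pCons: "gop (pCons a p) v = act a v + T (gop p v)"
proof -
  have "gop (pCons a p) v = (\<Sum>i\<le>Suc (degree p). act (coeff (pCons a p) i) ((T ^^ i) v))"
    by (rule gop_bound) (simp add: degree_pCons_le)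
  also have "\<dots> = (\<Sum>i\<le>degree p. act (coeff p i) ((T ^^ Suc i) v)) + act a v"
    by (subst sum.atMost_Suc_shift) simp
  also have "(\<Sum>i\<le>degree p. act (coeff p i) ((T ^^ Suc i) v)) = T (gop p v)"
    unfolding gop_def T_sum by (simp add: T_act)
  finally show ?thesis by (simp add: add.commute)
qed

lemma gop_0[simp]: "gop 0 v = 0"
  by (simp add: gop_def)

lemma gop_const[simp]: "gop [:c:] v = act c v"
  using gop_pCons[of c 0 v] by simp

lemma gop_X: "gop [:0, 1:] v = T v"
  using gop_pCons[of 0 "[:1:]" v] by (simp add: act_one)

lemma gop_one[simp]: "gop 1 v = v"
  using gop_const[of 1 v] by (simp add: act_one one_pCons)

lemma gop_addr: "gop p (v + w) = gop p v + gop p w"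
  by (induction p) (auto simp: gop_pCons act_addr T_add algebra_simps)

lemma gop_zeror[simp]: "gop p 0 = 0"
  using gop_addr[of p 0 0] by simp

lemma gop_negr: "gop p (- v) = - gop p v"
  using minus_unique[of "gop p v" "gop p (- v)"] gop_addr[of p v "-v"] by simp

lemma gop_diffr: "gop p (v - w) = gop p v - gop p w"
  using gop_addr[of p v "-w"] gop_negr by simp

lemma gop_sumr: "gop p (sum g A) = (\<Sum>x\<in>A. gop p (g x))"
  by (induction A rule: infinite_finite_induct) (auto simp: gop_addr)

lemma gop_add: "gop (p + q) v = gop p v + gop q v"
proof (induction p q rule: poly_induct2)
  case 0 then show ?case by simp
next
  case (pCons a p b q)
  then show ?case by (simp add: gop_pCons act_addl T_add algebra_simps)
qed

lemma gop_neg: "gop (- p) v = - gop p v"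
  using minus_unique[of "gop p v" "gop (- p) v"] gop_add[of p "-p" v] by simp

lemma gop_diff: "gop (p - q) v = gop p v - gop q v"
  using gop_add[of p "-q" v] gop_neg by simp

lemma gop_sum: "gop (sum g A) v = (\<Sum>x\<in>A. gop (g x) v)"
  by (induction A rule: infinite_finite_induct) (auto simp: gop_add)

lemma gop_smult: "gop (Polynomial.smult c p) v = act c (gop p v)"
  by (induction p) (auto simp: gop_pCons act_mult act_addr T_act)

lemma gop_T: "gop p (T v) = T (gop p v)"
  by (induction p) (auto simp: gop_pCons T_add T_act)

lemma act_comm: "act a (act c v) = act c (act a v)"
  by (metis act_mult mult.commute)

lemma gop_act: "gop p (act c v) = act c (gop p v)"
  by (induction p) (auto simp: gop_pCons act_addr T_act act_comm)

lemma gop_pCons0: "gop (pCons 0 r) v = T (gop r v)"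
  by (simp add: gop_pCons)

lemma gop_mult: "gop (p * q) v = gop p (gop q v)"
  by (induction p) (auto simp: gop_pCons gop_add gop_smult gop_pCons0)

lemma gop_comm:
  fixes S :: "'v \<Rightarrow> 'v"
  assumes "\<And>v w. S (v + w) = S v + S w" "\<And>a v. S (act a v) = act a (S v)" "\<And>v. S (T v) = T (S v)"
  shows "S (gop p v) = gop p (S v)"
proof -
  have S0: "S 0 = 0" using assms(1)[of 0 0] by simp
  show ?thesis by (induction p) (auto simp: gop_pCons assms S0)
qed

lemma gop_shift:
  fixes S :: "'v \<Rightarrow> 'v" and \<phi> :: "'a \<Rightarrow> 'a"
  assumes "\<And>v w. S (v + w) = S v + S w" "\<And>a v. S (act a v) = act (\<phi> a) (S v)"
    "\<And>v. S (T v) = T (S v)" "\<phi> 0 = 0"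
  shows "S (gop p v) = gop (map_poly \<phi> p) (S v)"
proof -
  have S0: "S 0 = 0" using assms(1)[of 0 0] by simp
  show ?thesis by (induction p) (auto simp: gop_pCons assms map_poly_pCons S0)
qed

end


locale sl2tf =
  fixes scale :: "complex \<Rightarrow> 'v::ab_group_add \<Rightarrow> 'v" and e f h :: "'v \<Rightarrow> 'v"
  assumes sl2: "sl2_module scale e f h" and tf: "torsion_free scale h"
begin

lemma vs: "vector_space scale" using sl2 unfolding sl2_module_def by auto

interpretation vs: vector_space scale by (rule vs)

lemma lin_e: "e (v + w) = e v + e w" "e (scale c v) = scale c (e v)"
  using sl2 unfolding sl2_module_def Vector_Spaces.linear_iff by auto
lemma lin_f: "f (v + w) = f v + f w" "f (scale c v) = scale c (f v)"
  using sl2 unfolding sl2_module_def Vector_Spaces.linear_iff by auto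
lemma lin_h: "h (v + w) = h v + h w" "h (scale c v) = scale c (h v)"
  using sl2 unfolding sl2_module_def Vector_Spaces.linear_iff by auto

lemma rel1: "e (f v) - f (e v) = h v" using sl2 unfolding sl2_module_def by auto
lemma rel2: "h (e v) - e (h v) = scale 2 (e v)" using sl2 unfolding sl2_module_def by auto
lemma rel3: "h (f v) - f (h v) = - scale 2 (f v)" using sl2 unfolding sl2_module_def by auto

abbreviation L where "L \<equiv> L0 scale h"

lemma L_def': "L v = scale (-1/2) (h v)" by (simp add: L0_def)

lemma L_add: "L (v + w) = L v + L w" by (simp add: L_def' lin_h vs.scale_right_distrib)
lemma L_scale: "L (scale c v) = scale c (L v)" by (simp add: L_def' lin_h mult.commute)

interpretation sc: ract scale L
  by unfold_locales (auto simp: vs.scale_right_distrib vs.scale_left_distrib L_add L_scale)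

abbreviation Z where "Z \<equiv> zact scale h"

lemma Z_gop: "Z p v = sc.gop p v"
  by (simp add: zact_def poly_op_def sc.gop_def)

lemma e_zero[simp]: "e 0 = 0" using lin_e(1)[of 0 0] by simp
lemma f_zero[simp]: "f 0 = 0" using lin_f(1)[of 0 0] by simp
lemma h_zero[simp]: "h 0 = 0" using lin_h(1)[of 0 0] by simp
lemma e_neg: "e (- v) = - e v" using minus_unique[of "e v" "e (- v)"] lin_e(1)[of v "-v"] by simp
lemma f_neg: "f (- v) = - f v" using minus_unique[of "f v" "f (- v)"] lin_f(1)[of v "-v"] by simp
lemma e_diff: "e (v - w) = e v - e w" using lin_e(1)[of v "-w"] e_neg by simp
lemma f_diff: "f (v - w) = f v - f w" using lin_f(1)[of v "-w"] f_neg by simp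

lemma h_L: "h v = - (L v + L v)"
proof -
  have "L v + L v = scale (-1/2 + -1/2) (h v)" by (simp only: L_def' vs.scale_left_distrib)
  also have "\<dots> = - h v" by (simp add: vs.scale_minus_left)
  finally show ?thesis by simp
qed

lemma eL: "e (L v) = L (e v) + e v"
proof -
  have "h (e v) = e (h v) + scale 2 (e v)" using rel2[of v] by (simp add: diff_eq_eq)
  then have "L (e v) = scale (-1/2) (e (h v)) + scale (-1/2) (scale 2 (e v))"
    by (simp add: L_def' vs.scale_right_distrib)
  also have "\<dots> = e (L v) - e v" by (simp add: L_def' lin_e vs.scale_minus_left e_neg)
  finally show ?thesis by simp
qed

lemma fL: "f (L v) = L (f v) - f v"
proof -
  have "h (f v) = f (h v) - scale 2 (f v)" using rel3[of v] by (simp add: diff_eq_eq)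
  then have "L (f v) = scale (-1/2) (f (h v)) - scale (-1/2) (scale 2 (f v))"
    by (simp add: L_def' vs.scale_right_diff_distrib)
  also have "\<dots> = f (L v) + f v" by (simp add: L_def' lin_f vs.scale_minus_left f_neg)
  finally show ?thesis by simp
qed

lemma ef: "e (f v) = f (e v) - (L v + L v)"
  using rel1[of v] h_L[of v] by (simp add: diff_eq_eq)

lemma L_neg: "L (- v) = - L v" using sc.T_neg .
lemma L_diff: "L (v - w) = L v - L w" using sc.T_diff .

abbreviation Cas where "Cas \<equiv> casimir scale e f h"

lemma Cas_def': "Cas v = L (L v) - L v + f (e v)"
  by (simp add: casimir_def Lm1_def L1_def f_neg)

lemma Cas_add: "Cas (v + w) = Cas v + Cas w"
  by (simp add: Cas_def' L_add lin_e lin_f algebra_simps)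

lemma Cas_scale: "Cas (scale c v) = scale c (Cas v)"
  by (simp add: Cas_def' L_scale lin_e lin_f vs.scale_right_diff_distrib vs.scale_right_distrib)

lemma Cas_L: "Cas (L v) = L (Cas v)"
  by (simp add: Cas_def' L_add L_diff fL eL f_diff lin_f algebra_simps)

lemma Cas_e: "e (Cas v) = Cas (e v)"
  by (simp add: Cas_def' L_add L_diff fL eL ef e_diff f_diff lin_e lin_f algebra_simps)

lemma Cas_f: "f (Cas v) = Cas (f v)"
  by (simp add: Cas_def' L_add L_diff fL eL ef e_diff f_diff lin_e lin_f algebra_simps)


lemma Cas_Z: "Cas (Z p v) = Z p (Cas v)"
  unfolding Z_gop by (rule sc.gop_comm) (auto simp: Cas_add Cas_scale Cas_L)

interpretation zc: ract Z Cas
  by unfold_locales (auto simp: Z_gop sc.gop_add sc.gop_addr sc.gop_mult Cas_add Cas_Z[unfolded Z_gop])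

interpretation cc: ract scale Cas
  by unfold_locales (auto simp: vs.scale_right_distrib vs.scale_left_distrib Cas_add Cas_scale)

lemma tfZ: "p \<noteq> 0 \<Longrightarrow> Z p v = 0 \<Longrightarrow> v = 0"
  using tf unfolding torsion_free_def by blast

lemma Z_pCons: "Z (pCons a p) v = scale a v + L (Z p v)"
  by (simp add: Z_gop sc.gop_pCons)

lemma Z_const: "Z [:c:] v = scale c v" by (simp add: Z_gop)

lemma f_Z: "f (Z p v) = Z (pcompose p [:-1, 1:]) (f v)"
proof (induction p)
  case 0 then show ?case by (simp add: Z_gop)
next
  case (pCons a p)
  have m: "Z [:-1, 1:] u = L u - u" for u
    by (simp add: Z_pCons Z_const vs.scale_minus_left)
  have "Z (pcompose (pCons a p) [:-1, 1:]) (f v) = Z [:a:] (f v) + Z [:-1, 1:] (Z (pcompose p [:-1, 1:]) (f v))"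
    by (simp only: pcompose_pCons zc.act_addl zc.act_mult)
  then show ?case
    by (simp add: m Z_pCons Z_const lin_f fL pCons.IH)
qed

lemma e_Z: "e (Z p v) = Z (pcompose p [:1, 1:]) (e v)"
proof (induction p)
  case 0 then show ?case by (simp add: Z_gop)
next
  case (pCons a p)
  have m: "Z [:1, 1:] u = u + L u" for u
    by (simp add: Z_pCons Z_const)
  have "Z (pcompose (pCons a p) [:1, 1:]) (e v) = Z [:a:] (e v) + Z [:1, 1:] (Z (pcompose p [:1, 1:]) (e v))"
    by (simp only: pcompose_pCons zc.act_addl zc.act_mult)
  then show ?case
    by (simp add: m Z_pCons Z_const lin_e eL pCons.IH add.commute)
qed

abbreviation ev where "ev \<equiv> zc.gop"

lemma f_ev: "f (ev a v) = ev (shm a) (f v)"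
  unfolding shm_def by (rule zc.gop_shift) (auto simp: lin_f f_Z Cas_f)

lemma e_ev: "e (ev a v) = ev (shp a) (e v)"
  unfolding shp_def by (rule zc.gop_shift) (auto simp: lin_e e_Z Cas_e)

definition JJ where "JJ a \<longleftrightarrow> (\<forall>v. ev a v = 0)"

lemma JJ_diff: "JJ a \<Longrightarrow> JJ b \<Longrightarrow> JJ (a - b)"
  by (simp add: JJ_def zc.gop_diff)
lemma JJ_mult: "JJ a \<Longrightarrow> JJ (b * a)"
  by (simp add: JJ_def zc.gop_mult)
lemma JJ_sat: "JJ ([:s:] * a) \<Longrightarrow> s \<noteq> 0 \<Longrightarrow> JJ a"
  unfolding JJ_def zc.gop_mult by (auto intro: tfZ)

lemma ev_Pm: "ev [:- [:0, -1, 1:], 1:] v = f (e v)"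
  by (simp add: zc.gop_pCons zc.act_negl Z_pCons Z_const Cas_def' vs.scale_minus_left L_neg L_diff L_add zc.act_one algebra_simps)

lemma ev_Pp: "ev [:- [:0, 1, 1:], 1:] v = e (f v)"
  by (simp add: zc.gop_pCons zc.act_negl Z_pCons Z_const Cas_def' ef L_neg L_diff L_add zc.act_one algebra_simps)

lemma JJ_m: "JJ a \<Longrightarrow> JJ (shm a * [:- [:0, -1, 1:], 1:])"
  unfolding JJ_def zc.gop_mult ev_Pm f_ev[symmetric] by simp

lemma JJ_p: "JJ a \<Longrightarrow> JJ (shp a * [:- [:0, 1, 1:], 1:])"
  unfolding JJ_def zc.gop_mult ev_Pp e_ev[symmetric] by simp

lemma ev_lift: "ev (map_poly (\<lambda>x. [:x:]) P) v = poly_op scale P Cas v"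
proof -
  have "ev (map_poly (\<lambda>x. [:x:]) P) v = cc.gop P v"
    by (induction P) (simp_all add: zc.gop_pCons cc.gop_pCons Polynomial.map_poly_pCons Z_const)
  then show ?thesis by (simp add: poly_op_def cc.gop_def)
qed


lemma Z_scale: "Z p (scale c v) = scale c (Z p v)"
  by (simp add: Z_gop sc.gop_act)

lemma casrat: "casimir_rat scale e f h (w, q) = (Z (q * q) (Cas w), q * q * q)"
proof -
  have "scale (-1) (f (- e w)) = f (e w)" by (simp add: vs.scale_minus_left f_neg)
  then show ?thesis
    by (simp add: casimir_rat_def frac_add_def rat_L0_def frac_cscale_def rat_Lm1_def rat_L1_def
        Lm1_def L1_def pc_pm zc.act_mult zc.act_addr[symmetric] Cas_def' vs.scale_minus_left)
qed

definition shf where "shf p x u \<longleftrightarrow> (\<exists>k. x = (Z (p ^ k) u, p ^ Suc k))"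

lemma shf_init: "shf p (v, p) v"
  unfolding shf_def by (rule exI[of _ 0]) (simp add: zc.act_one)

lemma shf_cas: "shf p x u \<Longrightarrow> shf p (casimir_rat scale e f h x) (Cas u)"
proof -
  assume "shf p x u"
  then obtain k where x: "x = (Z (p ^ k) u, p ^ Suc k)" by (auto simp: shf_def)
  have e1: "3 * k + 2 = Suc k + Suc k + k" and e2: "Suc (3 * k + 2) = Suc k + Suc k + Suc k" by simp_all
  have 1: "p ^ Suc k * p ^ Suc k * p ^ k = p ^ (3 * k + 2)"
    by (simp only: e1 power_add)
  have 2: "p ^ Suc k * p ^ Suc k * p ^ Suc k = p ^ Suc (3 * k + 2)"
    by (simp only: e2 power_add)
  show ?thesis unfolding shf_def
    by (rule exI[of _ "3 * k + 2"]) (simp del: power_Suc add: x casrat Cas_Z zc.act_mult[symmetric] 1 2)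
qed

lemma shf_iter: "shf p ((casimir_rat scale e f h ^^ i) (v, p)) ((Cas ^^ i) v)"
  by (induction i) (auto simp: shf_init shf_cas)

lemma shf_cscale: "shf p x u \<Longrightarrow> shf p (frac_cscale scale c x) (scale c u)"
  unfolding shf_def frac_cscale_def by (auto simp: Z_scale)

lemma shf_add: "shf p x u \<Longrightarrow> shf p y w \<Longrightarrow> shf p (frac_add scale h x y) (u + w)"
proof -
  assume "shf p x u" "shf p y w"
  then obtain k j where x: "x = (Z (p ^ k) u, p ^ Suc k)" and y: "y = (Z (p ^ j) w, p ^ Suc j)"
    by (auto simp: shf_def)
  have e1: "k + j + 1 = Suc j + k" and e2: "k + j + 1 = Suc k + j" and e3: "Suc (k + j + 1) = Suc k + Suc j"
    by simp_all
  have 1: "p ^ Suc j * p ^ k = p ^ (k + j + 1)" "p ^ Suc k * p ^ j = p ^ (k + j + 1)"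
    by (simp only: e1 power_add, simp only: e2 power_add)
  have 2: "p ^ Suc k * p ^ Suc j = p ^ Suc (k + j + 1)"
    by (simp only: e3 power_add)
  show ?thesis unfolding shf_def
    by (rule exI[of _ "k + j + 1"])
       (simp del: power_Suc add: x y frac_add_def zc.act_mult[symmetric] 1 2 zc.act_addr)
qed

lemma frac_add_zero: "frac_add scale h x frac_zero = x"
  by (simp add: frac_add_def frac_zero_def zc.act_one)

lemma shf_sum:
  assumes "ns \<noteq> []" "\<And>n. n \<in> set ns \<Longrightarrow> shf p (g n) (u n)"
  shows "shf p (frac_sum scale h (map g ns)) (\<Sum>n\<leftarrow>ns. u n)"
  using assms
proof (induction ns)
  case Nil then show ?case by simp
next
  case (Cons n ns)
  show ?case
  proof (cases "ns = []")
    case True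
    then show ?thesis using Cons.prems by (simp add: frac_sum_def frac_add_zero)
  next
    case False
    then have "shf p (frac_sum scale h (map g ns)) (\<Sum>n\<leftarrow>ns. u n)" using Cons by simp
    then show ?thesis using Cons.prems
      by (simp add: frac_sum_def shf_add)
  qed
qed

lemma frac_eq_zero: "frac_eq scale h x frac_zero \<longleftrightarrow> fst x = 0"
proof
  assume "frac_eq scale h x frac_zero"
  then obtain s where "s \<noteq> 0" "Z s (fst x) = 0"
    by (auto simp: frac_eq_def frac_zero_def zc.act_one)
  then show "fst x = 0" using tfZ by blast
next
  assume "fst x = 0"
  then show "frac_eq scale h x frac_zero"
    by (auto simp: frac_eq_def frac_zero_def zc.act_one intro!: exI[of _ 1])
qed

lemma poly_op_list: "(\<Sum>i\<leftarrow>[0..<Suc (degree P)]. scale (coeff P i) ((Cas ^^ i) v)) = poly_op scale P Cas v"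
proof -
  have "(\<Sum>i\<leftarrow>[0..<Suc (degree P)]. scale (coeff P i) ((Cas ^^ i) v))
      = (\<Sum>i\<in>set [0..<Suc (degree P)]. scale (coeff P i) ((Cas ^^ i) v))"
    by (rule sum_set_upt_conv_sum_list_nat[symmetric])
  also have "set [0..<Suc (degree P)] = {..degree P}" by auto
  finally show ?thesis by (simp add: poly_op_def)
qed

lemma fpo_shf: "shf p (frac_poly_op scale h P (casimir_rat scale e f h) (v, p)) (poly_op scale P Cas v)"
  unfolding frac_poly_op_def poly_op_list[symmetric]
  by (rule shf_sum) (auto intro: shf_cscale shf_iter)

lemma kills_equiv: "kills_casimir_rat scale e f h P \<longleftrightarrow> kills_casimir scale e f h P"
proof
  assume H: "kills_casimir_rat scale e f h P"
  show "kills_casimir scale e f h P" unfolding kills_casimir_def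
  proof
    fix v
    have "frac_eq scale h (frac_poly_op scale h P (casimir_rat scale e f h) (v, 1)) frac_zero"
      using H by (auto simp: kills_casimir_rat_def frac_ok_def)
    moreover obtain k where "frac_poly_op scale h P (casimir_rat scale e f h) (v, 1) = (Z (1 ^ k) (poly_op scale P Cas v), 1 ^ Suc k)"
      using fpo_shf[of 1 P v] by (auto simp: shf_def)
    ultimately show "poly_op scale P Cas v = 0" by (simp add: frac_eq_zero zc.act_one)
  qed
next
  assume H: "kills_casimir scale e f h P"
  show "kills_casimir_rat scale e f h P" unfolding kills_casimir_rat_def
  proof (intro allI impI)
    fix x :: "'v \<times> complex poly" assume "frac_ok x"
    then obtain v p where x: "x = (v, p)" "p \<noteq> 0" by (cases x) (auto simp: frac_ok_def)
    obtain k where "frac_poly_op scale h P (casimir_rat scale e f h) (v, p) = (Z (p ^ k) (poly_op scale P Cas v), p ^ Suc k)"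
      using fpo_shf[of p P v] by (auto simp: shf_def)
    then show "frac_eq scale h (frac_poly_op scale h P (casimir_rat scale e f h) x) frac_zero"
      using H by (simp add: x frac_eq_zero kills_casimir_def)
  qed
qed


lemma frac_sum_span:
  assumes "length cs = length bs" "list_all (\<lambda>c. snd c \<noteq> 0) cs" "list_all frac_ok bs"
  shows "\<exists>r. fst (frac_sum scale h (map2 (frac_rscale scale h) cs bs)) = (\<Sum>i<length bs. Z (r i) (fst (bs ! i)))
           \<and> snd (frac_sum scale h (map2 (frac_rscale scale h) cs bs)) \<noteq> 0"
  using assms
proof (induction cs bs rule: list_induct2)
  case Nil then show ?case by (simp add: frac_sum_def frac_zero_def)
next
  case (Cons c cs b bs)
  define S where "S = frac_sum scale h (map2 (frac_rscale scale h) cs bs)"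
  obtain r where r: "fst S = (\<Sum>i<length bs. Z (r i) (fst (bs ! i)))" and S0: "snd S \<noteq> 0"
    using Cons by (auto simp: S_def)
  have b0: "snd b \<noteq> 0" "snd c \<noteq> 0" using Cons.prems by (auto simp: frac_ok_def)
  have eq: "frac_sum scale h (map2 (frac_rscale scale h) (c # cs) (b # bs)) = frac_add scale h (frac_rscale scale h c b) S"
    by (simp add: frac_sum_def S_def)
  define r' where "r' i = (case i of 0 \<Rightarrow> snd S * fst c | Suc j \<Rightarrow> snd c * snd b * r j)" for i
  have "fst (frac_add scale h (frac_rscale scale h c b) S)
      = Z (snd S) (Z (fst c) (fst b)) + Z (snd c * snd b) (\<Sum>i<length bs. Z (r i) (fst (bs ! i)))"
    by (simp add: frac_add_def frac_rscale_def r)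
  also have "\<dots> = Z (r' 0) (fst ((b # bs) ! 0)) + (\<Sum>i<length bs. Z (r' (Suc i)) (fst ((b # bs) ! Suc i)))"
    by (simp add: r'_def zc.act_mult zc.act_sumr)
  also have "\<dots> = (\<Sum>i<Suc (length bs). Z (r' i) (fst ((b # bs) ! i)))"
    by (rule sum.lessThan_Suc_shift[symmetric])
  finally show ?case using eq b0 S0 by (auto simp: frac_add_def frac_rscale_def)
qed

lemma fr_span:
  assumes "finite_rank scale h"
  obtains B :: "nat \<Rightarrow> 'v" and n :: nat where "\<And>v. \<exists>t r. t \<noteq> 0 \<and> Z t v = (\<Sum>i<n. Z (r i) (B i))"
proof -
  obtain bs where bs: "list_all frac_ok bs"
    and H: "\<And>x. frac_ok x \<Longrightarrow> \<exists>cs. length cs = length bs \<and> list_all (\<lambda>c. snd c \<noteq> 0) cs \<and>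
               frac_eq scale h x (frac_sum scale h (map2 (frac_rscale scale h) cs bs))"
    using assms unfolding finite_rank_def by blast
  have "\<exists>t r. t \<noteq> 0 \<and> Z t v = (\<Sum>i<length bs. Z (r i) (fst (bs ! i)))" for v
  proof -
    obtain cs where cs: "length cs = length bs" "list_all (\<lambda>c. snd c \<noteq> 0) cs"
      and fe: "frac_eq scale h (v, 1) (frac_sum scale h (map2 (frac_rscale scale h) cs bs))"
      using H[of "(v, 1)"] by (auto simp: frac_ok_def)
    define y where "y = frac_sum scale h (map2 (frac_rscale scale h) cs bs)"
    obtain r where r: "fst y = (\<Sum>i<length bs. Z (r i) (fst (bs ! i)))" and y0: "snd y \<noteq> 0"
      using frac_sum_span[OF cs bs] by (auto simp: y_def)
    obtain s where s: "s \<noteq> 0" "Z s (Z (snd y) v - Z 1 (fst y)) = 0"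
      using fe by (auto simp: frac_eq_def y_def)
    then have "Z s (Z (snd y) v - fst y) = 0" by (simp add: zc.act_one)
    then have "Z (snd y) v - fst y = 0" by (rule tfZ[OF s(1)])
    then show ?thesis using r y0 by auto
  qed
  then show ?thesis using that[of "\<lambda>i. fst (bs ! i)" "length bs"] by blast
qed

lemma JJ_nonzero:
  assumes "finite_rank scale h"
  shows "\<exists>a. a \<noteq> 0 \<and> JJ a"
proof -
  obtain B :: "nat \<Rightarrow> 'v" and n :: nat where span: "\<And>v. \<exists>t r. t \<noteq> 0 \<and> Z t v = (\<Sum>i<n. Z (r i) (B i))"
    using fr_span[OF assms] by blast
  have "\<forall>j. \<exists>t. \<exists>r. t \<noteq> 0 \<and> Z t (Cas (B j)) = (\<Sum>i<n. Z (r i) (B i))" using span by blast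
  then obtain T where "\<forall>j. \<exists>r. T j \<noteq> 0 \<and> Z (T j) (Cas (B j)) = (\<Sum>i<n. Z (r i) (B i))"
    using choice[of "\<lambda>j t. \<exists>r. t \<noteq> 0 \<and> Z t (Cas (B j)) = (\<Sum>i<n. Z (r i) (B i))"] by blast
  then obtain R where "\<forall>j. T j \<noteq> 0 \<and> Z (T j) (Cas (B j)) = (\<Sum>i<n. Z (R j i) (B i))"
    using choice[of "\<lambda>j r. T j \<noteq> 0 \<and> Z (T j) (Cas (B j)) = (\<Sum>i<n. Z (r i) (B i))"] by blast
  then have TR: "\<And>j. T j \<noteq> 0" "\<And>j. Z (T j) (Cas (B j)) = (\<Sum>i<n. Z (R j i) (B i))" by auto
  define t where "t = (\<Prod>j<n. T j)"
  have t0: "t \<noteq> 0" using TR(1) by (simp add: t_def)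
  define u where "u j = (\<Prod>k\<in>{..<n} - {j}. T k)" for j
  have tu: "t = T j * u j" if "j < n" for j
    using that prod.remove[of "{..<n}" j T] by (simp add: t_def u_def)
  define M where "M j i = u j * R j i" for j i
  define D where "D v = Z t (Cas v)" for v
  have DB: "D (B j) = (\<Sum>i<n. Z (M j i) (B i))" if "j < n" for j
  proof -
    have "D (B j) = Z (u j * T j) (Cas (B j))"
      by (simp add: D_def tu[OF that] mult.commute)
    also have "\<dots> = Z (u j) (Z (T j) (Cas (B j)))" by (rule zc.act_mult)
    also have "\<dots> = (\<Sum>i<n. Z (M j i) (B i))"
      by (simp add: TR(2) zc.act_sumr zc.act_mult M_def)
    finally show ?thesis .
  qed
  interpret zd: ract Z D
    by unfold_locales (auto simp: D_def zc.act_addl zc.act_addr zc.act_mult zc.act_one Cas_add Cas_Z zc.act_comm)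
  define Mm where "Mm = mat n n (\<lambda>(j, i). M j i)"
  have Mm: "Mm \<in> carrier_mat n n" by (simp add: Mm_def)
  define N where "N = char_poly_matrix Mm"
  have N: "N \<in> carrier_mat n n" using Mm by (simp add: N_def)
  define \<chi> where "\<chi> = char_poly Mm"
  have chiN: "\<chi> = det N" by (simp add: \<chi>_def N_def char_poly_def)
  have Nent: "N $$ (j, i) = (if j = i then [:0, 1:] else 0) + [:- M j i:]" if "j < n" "i < n" for j i
    using that by (simp add: N_def char_poly_matrix_def Mm_def)
  have rows: "(\<Sum>i<n. zd.gop (N $$ (j, i)) (B i)) = 0" if "j < n" for j
  proof -
    have "(\<Sum>i<n. zd.gop (N $$ (j, i)) (B i)) = (\<Sum>i<n. (if j = i then D (B i) else 0) - Z (M j i) (B i))"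
      by (rule sum.cong) (auto simp: Nent that zd.gop_add zd.gop_X zd.act_negl)
    also have "\<dots> = D (B j) - (\<Sum>i<n. Z (M j i) (B i))"
      using that by (simp add: sum_subtractf)
    finally show ?thesis using DB[OF that] by simp
  qed
  have kill: "zd.gop \<chi> (B l) = 0" if l: "l < n" for l
  proof -
    have adj: "adj_mat N \<in> carrier_mat n n" "adj_mat N * N = det N \<cdot>\<^sub>m 1\<^sub>m n"
      using adj_mat[OF N] by auto
    have "zd.gop \<chi> (B l) = (\<Sum>i<n. if l = i then zd.gop \<chi> (B i) else 0)"
      using l by simp
    also have "\<dots> = (\<Sum>i<n. zd.gop ((det N \<cdot>\<^sub>m 1\<^sub>m n) $$ (l, i)) (B i))"
      by (rule sum.cong) (use l in \<open>auto simp: chiN\<close>)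
    also have "\<dots> = (\<Sum>i<n. zd.gop ((adj_mat N * N) $$ (l, i)) (B i))"
      by (simp add: adj)
    also have "\<dots> = (\<Sum>i<n. \<Sum>k<n. zd.gop (adj_mat N $$ (l, k)) (zd.gop (N $$ (k, i)) (B i)))"
      by (rule sum.cong) (use l adj(1) N in \<open>auto simp: scalar_prod_def atLeast0LessThan zd.gop_sum zd.gop_mult\<close>)
    also have "\<dots> = (\<Sum>k<n. zd.gop (adj_mat N $$ (l, k)) (\<Sum>i<n. zd.gop (N $$ (k, i)) (B i)))"
      by (subst sum.swap) (simp add: zd.gop_sumr)
    also have "\<dots> = 0" by (simp add: rows)
    finally show ?thesis .
  qed
  have killall: "zd.gop \<chi> v = 0" for v
  proof -
    obtain t' r where t': "t' \<noteq> 0" "Z t' v = (\<Sum>i<n. Z (r i) (B i))" using span by blast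
    have "Z t' (zd.gop \<chi> v) = zd.gop \<chi> (Z t' v)" by (simp add: zd.gop_act)
    also have "\<dots> = 0" by (simp add: t'(2) zd.gop_sumr zd.gop_act kill)
    finally show ?thesis using t'(1) tfZ by blast
  qed
  define a where "a = pcompose \<chi> [:0, t:]"
  have eva: "ev (pcompose p [:0, t:]) v = zd.gop p v" for p v
  proof (induction p arbitrary: v)
    case 0 then show ?case by simp
  next
    case (pCons c p)
    have q: "ev [:0, t:] w = D w" for w
      by (simp add: zc.gop_pCons D_def Cas_Z)
    have "ev (pcompose (pCons c p) [:0, t:]) v = ev [:c:] v + ev [:0, t:] (ev (pcompose p [:0, t:]) v)"
      by (simp only: pcompose_pCons zc.gop_add zc.gop_mult)
    then show ?case
      by (simp add: q pCons.IH zd.gop_pCons)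
  qed
  have dc: "degree \<chi> = n" "coeff \<chi> n = 1" using degree_monic_char_poly[OF Mm] by (auto simp: \<chi>_def)
  have "lead_coeff a = lead_coeff \<chi> * lead_coeff [:0, t:] ^ degree \<chi>"
    unfolding a_def by (rule lead_coeff_comp) (simp add: t0)
  then have "lead_coeff a = t ^ n" using dc t0 by simp
  then have "a \<noteq> 0" using t0 by auto
  moreover have "JJ a" by (simp add: JJ_def a_def eva killall)
  ultimately show ?thesis by blast
qed


lemma kills_JJ: "kills_casimir scale e f h P \<longleftrightarrow> JJ (map_poly (\<lambda>x. [:x:]) P)"
  by (simp only: JJ_def ev_lift kills_casimir_def)

lemma kills_smult: "kills_casimir scale e f h P \<Longrightarrow> kills_casimir scale e f h (Polynomial.smult c P)"
proof -
  have *: "poly_op scale Q Cas v = cc.gop Q v" for Q v by (simp add: poly_op_def cc.gop_def)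
  show "kills_casimir scale e f h P \<Longrightarrow> kills_casimir scale e f h (Polynomial.smult c P)"
    by (simp add: kills_casimir_def * cc.gop_smult)
qed

lemma exists_kill:
  assumes "finite_rank scale h"
  shows "\<exists>m. m \<noteq> 0 \<and> kills_casimir scale e f h m"
proof -
  obtain a where a: "a \<noteq> 0" "JJ a" using JJ_nonzero[OF assms] by blast
  have "\<exists>m. m \<noteq> 0 \<and> JJ (map_poly (\<lambda>x. [:x:]) m)"
    by (rule alg_main[of JJ, OF JJ_diff JJ_mult JJ_sat JJ_m JJ_p a(2) a(1)])
  then obtain m where m: "m \<noteq> 0" "JJ (map_poly (\<lambda>x. [:x:]) m)" by blast
  have "kills_casimir scale e f h m" using kills_JJ[of m] m(2) by simp
  then show ?thesis using m(1) by blast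
qed

end

theorem theorem7p1:
  fixes scale :: "complex \<Rightarrow> 'v::ab_group_add \<Rightarrow> 'v"
    and e f h :: "'v \<Rightarrow> 'v"
  assumes "sl2_module scale e f h"
    and "torsion_free scale h"
    and "finite_rank scale h"
  shows "(\<exists>P. is_minpoly (kills_casimir scale e f h) P) \<and>
         (\<forall>P. is_minpoly (kills_casimir scale e f h) P \<longleftrightarrow>
              is_minpoly (kills_casimir_rat scale e f h) P)"
proof -
  interpret sl2tf scale e f h using assms(1,2) by unfold_locales
  define K where "K = kills_casimir scale e f h"
  define Pn where "Pn n \<longleftrightarrow> (\<exists>Q. K Q \<and> Q \<noteq> 0 \<and> degree Q = n)" for n
  obtain m where "m \<noteq> 0" "K m" using exists_kill[OF assms(3)] by (auto simp: K_def)
  then have "Pn (degree m)" by (auto simp: Pn_def)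
  then obtain n where Pn: "Pn n" and nmin: "\<And>k. k < n \<Longrightarrow> \<not> Pn k"
    using exists_least_iff[of Pn] by blast
  then obtain Q where Q: "K Q" "Q \<noteq> 0" "degree Q = n" by (auto simp: Pn_def)
  define P where "P = Polynomial.smult (inverse (lead_coeff Q)) Q"
  have lc: "lead_coeff Q \<noteq> 0" using Q(2) by (rule leading_coeff_neq_0)
  have "P \<noteq> 0" using Q lc by (simp add: P_def)
  moreover have "lead_coeff P = 1" using lc by (simp add: P_def)
  moreover have "K P" using kills_smult Q(1) by (simp add: P_def K_def)
  moreover have "degree P \<le> degree R" if "R \<noteq> 0" "K R" for R
  proof -
    have "degree P = n" using lc Q by (simp add: P_def)
    then show ?thesis using nmin[of "degree R"] that by (auto simp: Pn_def not_less[symmetric])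
  qed
  ultimately have "is_minpoly K P" by (auto simp: is_minpoly_def)
  moreover have "kills_casimir_rat scale e f h = K"
    by (rule ext) (simp add: kills_equiv K_def)
  ultimately show ?thesis unfolding K_def by auto
qed

end
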